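(* Let $I$ and $J$ be intervals of $B$ and $\epsilon\ge0$. If $k_I$ and $k_J$ are $\Lambda_\epsilon$-interleaved, then either $I$ and $J$ are of the same type, or $k_I$ and $k_J$ are both $\Lambda_{2\epsilon}$-trivial.
   Context: Let $k$ be a field. The bipath poset $B$ has underlying set $(\mathbb{R}\times\{1,2\})\sqcup\{-\infty,+\infty\}$. Its order is: $x\le y$ iff $x=-\infty$, or $y=+\infty$, or $x=(s,i)$, $y=(t,i)$ with the same $i$ and $s\le t$. An interval of $B$ is a nonempty convex and connected subset (convex: $p,q\in I$, $p\le r\le q$ imply $r\in I$; connected: any two elements are joined by a finite sequence in $I$ with consecutive ones comparable). The interval module $k_I$ (a functor $B\to$ $k$-vector spaces) is $k$ on $I$ and $0$ elsewhere, with identity maps within $I$ and zero maps otherwise. The types of intervals are: - $\mathcal{U}$: intervals contained in $\mathbb{R}\times\{1\}$; - $\mathcal{D}$: intervals contained in $\mathbb{R}\times\{2\}$; - $\mathcal{B}=\{B\}$; - $\mathcal{L}$: intervals $\neq B$ containing $-\infty$; - $\mathcal{R}$: intervals $\neq B$ containing $+\infty$. Two intervals are of the same type if they lie in the same one of these sets. For $\epsilon\ge0$, $\Lambda_\epsilon\colon B\to B$ sends $(r,i)\mapsto(r+\epsilon,i)$ and fixes $\pm\infty$. Then: - $V(\epsilon)_b=V_{\Lambda_\epsilon b}$ and $V(\epsilon)(b,b')=V(\Lambda_\epsilon b,\Lambda_\epsilon b')$; $\phi(\epsilon)$ has components $\phi_{\Lambda_\epsilon b}$; - $V_{0\to\epsilon}$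 has components $V(b,\Lambda_\epsilon b)$; - $V$ is $\Lambda_\epsilon$-trivial if $V_{0\to\epsilon}=0$; - a $\Lambda_\epsilon$-interleaving is a pair $\alpha\colon V\to W(\epsilon)$, $\beta\colon W\to V(\epsilon)$ with $\beta(\epsilon)\alpha=V_{0\to2\epsilon}$ and $\alpha(\epsilon)\beta=W_{0\to2\epsilon}$. *)

theory Defs
  imports Main "HOL.Real"
begin

datatype lane = L1 | L2

text \<open>MInf = -infinity, PInf = +infinity, Pt r i = (r,i).\<close>
datatype bip = MInf | Pt real lane | PInf

definition bleq :: "bip \<Rightarrow> bip \<Rightarrow> bool" where
  "bleq x y \<longleftrightarrow> x = MInf \<or> y = PInf \<or>
     (\<exists>s t i. x = Pt s i \<and> y = Pt t i \<and> s \<le> t)"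

definition comparable :: "bip \<Rightarrow> bip \<Rightarrow> bool" where
  "comparable x y \<longleftrightarrow> bleq x y \<or> bleq y x"

definition convex_set :: "bip set \<Rightarrow> bool" where
  "convex_set I \<longleftrightarrow> (\<forall>p\<in>I. \<forall>q\<in>I. \<forall>r. bleq p r \<and> bleq r q \<longrightarrow> r \<in> I)"

definition connected_set :: "bip set \<Rightarrow> bool" where
  "connected_set I \<longleftrightarrow> (\<forall>p\<in>I. \<forall>q\<in>I. \<exists>xs. xs \<noteq> [] \<and> hd xs = p \<and> last xs = q \<and>
      set xs \<subseteq> I \<and> (\<forall>n. Suc n < length xs \<longrightarrow> comparable (xs ! n) (xs ! Suc n)))"

definition is_interval :: "bip set \<Rightarrow> bool" where
  "is_interval I \<longleftrightarrow> I \<noteq> {} \<and> convex_set I \<and> connected_set I"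

definition typeU :: "bip set \<Rightarrow> bool" where
  "typeU I \<longleftrightarrow> I \<subseteq> range (\<lambda>r. Pt r L1)"
definition typeD :: "bip set \<Rightarrow> bool" where
  "typeD I \<longleftrightarrow> I \<subseteq> range (\<lambda>r. Pt r L2)"
definition typeB :: "bip set \<Rightarrow> bool" where
  "typeB I \<longleftrightarrow> I = UNIV"
definition typeL :: "bip set \<Rightarrow> bool" where
  "typeL I \<longleftrightarrow> I \<noteq> UNIV \<and> MInf \<in> I"
definition typeR :: "bip set \<Rightarrow> bool" where
  "typeR I \<longleftrightarrow> I \<noteq> UNIV \<and> PInf \<in> I"

definition same_type :: "bip set \<Rightarrow> bip set \<Rightarrow> bool" where
  "same_type I J \<longleftrightarrow> (typeU I \<and> typeU J) \<or> (typeD I \<and> typeD J) \<or> (typeB I \<and> typeB J)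
     \<or> (typeL I \<and> typeL J) \<or> (typeR I \<and> typeR J)"

text \<open>A module V is given by its spaces V_b (here subspaces of the field k itself,
 which suffices for interval modules, whose spaces are k or 0) and structure maps
 V(b,b'). Morphisms are families of k-linear maps V_b \<rightarrow> W_b, compared extensionally
 on the spaces V_b.\<close>

type_synonym 'k pmod = "(bip \<Rightarrow> 'k set) \<times> (bip \<Rightarrow> bip \<Rightarrow> 'k \<Rightarrow> 'k)"

definition spc :: "'k pmod \<Rightarrow> bip \<Rightarrow> 'k set" where "spc V = fst V"
definition smap :: "'k pmod \<Rightarrow> bip \<Rightarrow> bip \<Rightarrow> 'k \<Rightarrow> 'k" where "smap V = snd V"

definition intmod :: "bip set \<Rightarrow> ('k::field) pmod" where
  "intmod I = ((\<lambda>b. if b \<in> I then UNIV else {0}),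
               (\<lambda>b b'. if b \<in> I \<and> b' \<in> I then id else (\<lambda>_. 0)))"

definition lin_on :: "('k::field) set \<Rightarrow> ('k \<Rightarrow> 'k) \<Rightarrow> bool" where
  "lin_on S f \<longleftrightarrow> (\<forall>x\<in>S. \<forall>y\<in>S. f (x + y) = f x + f y) \<and> (\<forall>c. \<forall>x\<in>S. f (c * x) = c * f x)"

definition is_morph :: "('k::field) pmod \<Rightarrow> 'k pmod \<Rightarrow> (bip \<Rightarrow> 'k \<Rightarrow> 'k) \<Rightarrow> bool" where
  "is_morph V W \<phi> \<longleftrightarrow>
     (\<forall>b. (\<forall>x\<in>spc V b. \<phi> b x \<in> spc W b) \<and> lin_on (spc V b) (\<phi> b)) \<and>
     (\<forall>b b'. bleq b b' \<longrightarrow> (\<forall>x\<in>spc V b. smap W b b' (\<phi> b x) = \<phi> b' (smap V b b' x)))"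

definition Lam :: "real \<Rightarrow> bip \<Rightarrow> bip" where
  "Lam e b = (case b of Pt r i \<Rightarrow> Pt (r + e) i | _ \<Rightarrow> b)"

definition shift :: "real \<Rightarrow> 'k pmod \<Rightarrow> 'k pmod" where
  "shift e V = ((\<lambda>b. spc V (Lam e b)), (\<lambda>b b'. smap V (Lam e b) (Lam e b')))"

definition triv :: "real \<Rightarrow> ('k::field) pmod \<Rightarrow> bool" where
  "triv e V \<longleftrightarrow> (\<forall>b. \<forall>x\<in>spc V b. smap V b (Lam e b) x = 0)"

definition interleaving :: "real \<Rightarrow> ('k::field) pmod \<Rightarrow> 'k pmod \<Rightarrow>
    (bip \<Rightarrow> 'k \<Rightarrow> 'k) \<Rightarrow> (bip \<Rightarrow> 'k \<Rightarrow> 'k) \<Rightarrow> bool" where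
  "interleaving e V W \<alpha> \<beta> \<longleftrightarrow>
     is_morph V (shift e W) \<alpha> \<and> is_morph W (shift e V) \<beta> \<and>
     (\<forall>b. \<forall>x\<in>spc V b. \<beta> (Lam e b) (\<alpha> b x) = smap V b (Lam (2 * e) b) x) \<and>
     (\<forall>b. \<forall>x\<in>spc W b. \<alpha> (Lam e b) (\<beta> b x) = smap W b (Lam (2 * e) b) x)"

definition interleaved :: "real \<Rightarrow> ('k::field) pmod \<Rightarrow> 'k pmod \<Rightarrow> bool" where
  "interleaved e V W \<longleftrightarrow> (\<exists>\<alpha> \<beta>. interleaving e V W \<alpha> \<beta>)"

end

theory Submission
  imports Defs
begin

lemma key:
  fixes \<alpha> \<beta> :: "bip \<Rightarrow> 'k::field \<Rightarrow> 'k"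
  assumes K: "interleaving e (intmod I :: 'k pmod) (intmod J) \<alpha> \<beta>"
    and b: "b \<in> I" and b2: "Lam (2*e) b \<in> I"
  shows "Lam e b \<in> J"
proof (rule ccontr)
  assume nJ: "Lam e b \<notin> J"
  have m1: "is_morph (intmod I :: 'k pmod) (shift e (intmod J)) \<alpha>"
   and m2: "is_morph (intmod J :: 'k pmod) (shift e (intmod I)) \<beta>"
   and c: "\<forall>b. \<forall>x\<in>spc (intmod I :: 'k pmod) b. \<beta> (Lam e b) (\<alpha> b x) = smap (intmod I :: 'k pmod) b (Lam (2 * e) b) x"
    using K unfolding interleaving_def by auto
  have "(1::'k) \<in> spc (intmod I :: 'k pmod) b" by (simp add: spc_def intmod_def b)
  then have a0: "\<alpha> b 1 \<in> spc (shift e (intmod J :: 'k pmod)) b"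
    using m1 unfolding is_morph_def by blast
  then have "\<alpha> b 1 = 0" using nJ by (simp add: spc_def shift_def intmod_def)
  have lin: "lin_on (spc (intmod J :: 'k pmod) (Lam e b)) (\<beta> (Lam e b))"
    using m2 unfolding is_morph_def by blast
  have z: "(0::'k) \<in> spc (intmod J :: 'k pmod) (Lam e b)" by (simp add: spc_def intmod_def)
  have "\<beta> (Lam e b) (0 * 0) = 0 * \<beta> (Lam e b) 0"
    using lin z unfolding lin_on_def by blast
  then have b0: "\<beta> (Lam e b) 0 = 0" by simp
  have "\<beta> (Lam e b) (\<alpha> b 1) = smap (intmod I :: 'k pmod) b (Lam (2 * e) b) 1"
    using c \<open>(1::'k) \<in> spc (intmod I :: 'k pmod) b\<close> by blast
  also have "\<dots> = 1" using b b2 by (simp add: smap_def intmod_def)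
  finally show False using b0 \<open>\<alpha> b 1 = 0\<close> by simp
qed

lemma ntriv:
  assumes "\<not> triv e (intmod I :: ('k::field) pmod)"
  shows "\<exists>b\<in>I. Lam e b \<in> I"
  using assms unfolding triv_def spc_def smap_def intmod_def
  by (auto split: if_splits)

lemma inter_sym:
  "interleaving e V W \<alpha> \<beta> \<Longrightarrow> interleaving e W V \<beta> \<alpha>"
  unfolding interleaving_def by auto

lemma both_inf:
  assumes "is_interval I" "MInf \<in> I" "PInf \<in> I"
  shows "I = UNIV"
  using assms unfolding is_interval_def convex_set_def bleq_def by blast

lemma lane:
  assumes I: "is_interval I" and m: "MInf \<notin> I" and p: "PInf \<notin> I"
    and s: "Pt s i \<in> I" and x: "x \<in> I"
  shows "\<exists>t. x = Pt t i"
proof -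
  obtain xs where xs: "xs \<noteq> []" "hd xs = Pt s i" "last xs = x" "set xs \<subseteq> I"
    "\<forall>n. Suc n < length xs \<longrightarrow> comparable (xs ! n) (xs ! Suc n)"
    using I s x unfolding is_interval_def connected_set_def by blast
  have "\<forall>n. n < length xs \<longrightarrow> (\<exists>t. xs ! n = Pt t i)"
  proof (intro allI)
    fix n show "n < length xs \<longrightarrow> (\<exists>t. xs ! n = Pt t i)"
    proof (induction n)
      case 0
      then show ?case using xs by (cases xs) auto
    next
      case (Suc n)
      show ?case
      proof
        assume l: "Suc n < length xs"
        then obtain t where t: "xs ! n = Pt t i" using Suc by auto
        have c: "comparable (xs ! n) (xs ! Suc n)" using xs l by blast
        have "xs ! Suc n \<in> I" using xs l by (meson nth_mem subsetD)
        then have "xs ! Suc n \<noteq> MInf" "xs ! Suc n \<noteq> PInf" using m p by auto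
        then obtain t' j where "xs ! Suc n = Pt t' j" by (cases "xs ! Suc n") auto
        then show "\<exists>t. xs ! Suc n = Pt t i"
          using c t unfolding comparable_def bleq_def by auto
      qed
    qed
  qed
  moreover have "x = xs ! (length xs - 1)" using xs by (simp add: last_conv_nth)
  ultimately show ?thesis using xs(1) by auto
qed

lemma main_dir:
  fixes \<alpha> \<beta> :: "bip \<Rightarrow> 'k::field \<Rightarrow> 'k"
  assumes I: "is_interval I" and J: "is_interval J"
    and K: "interleaving e (intmod I :: 'k pmod) (intmod J) \<alpha> \<beta>"
    and b: "b \<in> I" and b2: "Lam (2*e) b \<in> I"
  shows "same_type I J"
proof -
  have K': "interleaving e (intmod J :: 'k pmod) (intmod I) \<beta> \<alpha>" using K by (rule inter_sym)
  have LM: "\<And>z. z = MInf \<or> z = PInf \<Longrightarrow> Lam e z = z \<and> Lam (2*e) z = z"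
    by (auto simp: Lam_def)
  have mI: "MInf \<in> I \<longleftrightarrow> MInf \<in> J"
    using key[OF K, of MInf] key[OF K', of MInf] LM by auto
  have pI: "PInf \<in> I \<longleftrightarrow> PInf \<in> J"
    using key[OF K, of PInf] key[OF K', of PInf] LM by auto
  have bJ: "Lam e b \<in> J" using key[OF K b b2] .
  show ?thesis
  proof (cases "MInf \<in> I")
    case True
    then show ?thesis
    proof (cases "PInf \<in> I")
      case True
      then show ?thesis using \<open>MInf \<in> I\<close> mI pI both_inf[OF I] both_inf[OF J]
        by (simp add: same_type_def typeB_def)
    next
      case False
      then show ?thesis using \<open>MInf \<in> I\<close> mI pI
        by (auto simp: same_type_def typeL_def)
    qed
  next
    case False
    then show ?thesis
    proof (cases "PInf \<in> I")
      case True
      then show ?thesis using \<open>MInf \<notin> I\<close> mI pI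
        by (auto simp: same_type_def typeR_def)
    next
      case False
      then have "b \<noteq> MInf" "b \<noteq> PInf" using \<open>MInf \<notin> I\<close> b by auto
      then obtain s i where bs: "b = Pt s i" by (cases b) auto
      then have "Pt (s + e) i \<in> J" using bJ by (simp add: Lam_def)
      then have lJ: "\<forall>x\<in>J. \<exists>t. x = Pt t i"
        using lane[OF J] \<open>MInf \<notin> I\<close> False mI pI by blast
      have lI: "\<forall>x\<in>I. \<exists>t. x = Pt t i"
        using lane[OF I] \<open>MInf \<notin> I\<close> False b bs by blast
      show ?thesis
      proof (cases i)
        case L1
        then show ?thesis using lI lJ by (auto simp: same_type_def typeU_def)
      next
        case L2
        then show ?thesis using lI lJ by (auto simp: same_type_def typeD_def)
      qed
    qed
  qed
qed

lemma same_type_sym: "same_type I J \<Longrightarrow> same_type J I"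
  unfolding same_type_def by auto

theorem lemma4p9:
  fixes I J :: "bip set" and \<epsilon> :: real
  assumes "is_interval I" and "is_interval J" and "\<epsilon> \<ge> 0"
    and "interleaved \<epsilon> (intmod I :: ('k::field) pmod) (intmod J)"
  shows "same_type I J \<or>
         (triv (2 * \<epsilon>) (intmod I :: 'k pmod) \<and> triv (2 * \<epsilon>) (intmod J :: 'k pmod))"
proof -
  obtain \<alpha> \<beta> where K: "interleaving \<epsilon> (intmod I :: 'k pmod) (intmod J) \<alpha> \<beta>"
    using assms(4) unfolding interleaved_def by blast
  have K': "interleaving \<epsilon> (intmod J :: 'k pmod) (intmod I) \<beta> \<alpha>" using K by (rule inter_sym)
  show ?thesis
  proof (rule ccontr)
    assume n: "\<not> ?thesis"
    then have ns: "\<not> same_type I J" by blast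
    show False
    proof (cases "triv (2 * \<epsilon>) (intmod I :: 'k pmod)")
      case True
      then have "\<not> triv (2 * \<epsilon>) (intmod J :: 'k pmod)" using n by blast
      then obtain b where "b \<in> J" "Lam (2*\<epsilon>) b \<in> J" using ntriv by blast
      then have "same_type J I" using main_dir[OF assms(2) assms(1) K'] by blast
      then show False using ns same_type_sym by blast
    next
      case False
      then obtain b where "b \<in> I" "Lam (2*\<epsilon>) b \<in> I" using ntriv by blast
      then have "same_type I J" using main_dir[OF assms(1) assms(2) K] by blast
      then show False using ns by blast
    qed
  qed
qed

end
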